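(* For any $F\subset\bigcup_kS_k$ there is $d\in\{1,\dots,N\}$ such that $S^{N-1}_{\mathbb R}\cap\bar S^{N-1}_{\mathbb R,F}=S^{N-1,d-1}_{\mathbb R}$. Moreover $d\in\{1,2,N\}$.
   Context: $C(S^{N-1}_{\mathbb R,+})$ denotes the universal $C^*$-algebra generated by self-adjoint $x_1,\dots,x_N$ with $\sum_ix_i^2=1$; subspaces are quotients by relations among the $x_i$, intersections impose both sets of relations. $S^{N-1}_{\mathbb R}$ is defined by $x_ix_j=x_jx_i$ for all $i,j$ (the usual real sphere), and for $d\in\{1,\dots,N\}$, $S^{N-1,d-1}_{\mathbb R}=\{x\in S^{N-1}_{\mathbb R}: x_{i_0}\cdots x_{i_d}=0$ for all pairwise distinct $i_0,\dots,i_d\}$ (so $S^{N-1,N-1}_{\mathbb R}=S^{N-1}_{\mathbb R}$). For $\sigma\in S_k$ and indices $i_1,\dots,i_k$ let $\varepsilon_\sigma(i)=(-1)^m$ with $m$ the number of pairs $r<s$ with $\sigma(r)>\sigma(s)$ and $i_{\sigma(r)}\ne i_{\sigma(s)}$. For $F\subset\bigcup_kS_k$, $\bar S^{N-1}_{\mathbb R,F}$ is the subsphere of $S^{N-1}_{\mathbb R,+}$ defined by the relations $x_{i_1}\cdots x_{i_k}=\varepsilon_\sigma(i)x_{i_{\sigma(1)}}\cdots x_{i_{\sigma(k)}}$ for all $\sigma\in F$ (with $\sigma\in S_k$) and all $i_1,\dots,i_k$. *)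

theory Defs
  imports Complex_Main "HOL-Combinatorics.Permutations"
begin

text \<open>Points are functions x :: nat => real; coordinates x_1..x_N are x 0 .. x (N-1),
  and x i = 0 for i >= N (extensional).\<close>

definition real_sphere :: "nat \<Rightarrow> (nat \<Rightarrow> real) set" where
  "real_sphere N = {x. (\<forall>i\<ge>N. x i = 0) \<and> (\<Sum>i<N. (x i)^2) = 1}"

definition eps_sign :: "(nat \<Rightarrow> nat) \<Rightarrow> nat list \<Rightarrow> real" where
  "eps_sign \<sigma> is = (-1) ^ card {(r, s). r < s \<and> s < length is \<and> \<sigma> r > \<sigma> s
                                    \<and> is ! (\<sigma> r) \<noteq> is ! (\<sigma> s)}"

definition perm_family :: "(nat \<times> (nat \<Rightarrow> nat)) set \<Rightarrow> bool" where
  "perm_family F \<longleftrightarrow> (\<forall>(k, \<sigma>)\<in>F. \<sigma> permutes {..<k})"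

text \<open>Classical points (commuting coordinates) satisfying the relations of bar S_{R,F}:
  x_{i_1}...x_{i_k} = eps_sigma(i) x_{i_sigma(1)}...x_{i_sigma(k)}.\<close>
definition half_liberated_points :: "nat \<Rightarrow> (nat \<times> (nat \<Rightarrow> nat)) set \<Rightarrow> (nat \<Rightarrow> real) set" where
  "half_liberated_points N F = {x. \<forall>(k, \<sigma>)\<in>F. \<forall>is. length is = k \<and> set is \<subseteq> {..<N} \<longrightarrow>
      prod_list (map x is) = eps_sign \<sigma> is * prod_list (map (\<lambda>j. x (is ! \<sigma> j)) [0..<k])}"

definition real_sphere_sub :: "nat \<Rightarrow> nat \<Rightarrow> (nat \<Rightarrow> real) set" where
  "real_sphere_sub N d = {x \<in> real_sphere N. \<forall>is. length is = d + 1 \<and> distinct is \<and> set is \<subseteq> {..<N}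
      \<longrightarrow> prod_list (map x is) = 0}"

end

theory Submission
  imports Defs
begin

definition Bset :: "(nat \<Rightarrow> nat) \<Rightarrow> nat list \<Rightarrow> (nat \<Rightarrow> nat \<Rightarrow> bool) \<Rightarrow> (nat \<times> nat) set" where
  "Bset \<sigma> is Q = {(r, s). r < s \<and> s < length is \<and> \<sigma> r > \<sigma> s \<and> Q (is ! (\<sigma> r)) (is ! (\<sigma> s))}"

lemma finite_Bset: "finite (Bset \<sigma> is Q)"
proof -
  have "Bset \<sigma> is Q \<subseteq> {..<length is} \<times> {..<length is}"
    by (auto simp: Bset_def)
  then show ?thesis by (rule finite_subset) auto
qed

lemma eps_Bset: "eps_sign \<sigma> is = (-1) ^ card (Bset \<sigma> is (\<lambda>x y. x \<noteq> y))"
  by (simp add: eps_sign_def Bset_def)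

lemma Bset_map:
  assumes "\<forall>r<length is. \<sigma> r < length is"
  shows "Bset \<sigma> (map g is) (\<lambda>x y. x \<noteq> y) = Bset \<sigma> is (\<lambda>x y. g x \<noteq> g y)"
  using assms by (auto simp: Bset_def)

lemma Bset_cong:
  assumes "\<And>x y. x \<in> set is \<Longrightarrow> y \<in> set is \<Longrightarrow> P x y = Q x y"
  and "\<forall>r<length is. \<sigma> r < length is"
  shows "Bset \<sigma> is P = Bset \<sigma> is Q"
  using assms by (auto simp: Bset_def)

lemma Bset_add:
  assumes "\<And>x y. P x y \<longleftrightarrow> Q x y \<or> R x y" "\<And>x y. \<not> (Q x y \<and> R x y)"
  shows "card (Bset \<sigma> is P) = card (Bset \<sigma> is Q) + card (Bset \<sigma> is R)"
proof -
  have "Bset \<sigma> is P = Bset \<sigma> is Q \<union> Bset \<sigma> is R"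
    using assms(1) by (auto simp: Bset_def)
  moreover have "Bset \<sigma> is Q \<inter> Bset \<sigma> is R = {}"
    using assms(2) by (auto simp: Bset_def)
  ultimately show ?thesis by (simp add: card_Un_disjoint finite_Bset)
qed

lemma m1pow: "((-1::real)^n = -1) = odd n" "(-1::real)^n = 1 \<or> (-1::real)^n = -1"
  by (cases "even n"; simp)+

lemma eps_cases: "eps_sign \<sigma> is = 1 \<or> eps_sign \<sigma> is = -1"
  unfolding eps_Bset by (rule m1pow(2))

lemma eps_neg_iff: "eps_sign \<sigma> is = -1 \<longleftrightarrow> odd (card (Bset \<sigma> is (\<lambda>x y. x \<noteq> y)))"
  by (simp add: eps_Bset m1pow)

lemma prod_perm:
  assumes "\<sigma> permutes {..<k}" "length is = k"
  shows "prod_list (map (\<lambda>j. x (is ! \<sigma> j)) [0..<k]) = prod_list (map (x::nat\<Rightarrow>real) is)"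
proof -
  have "map (\<lambda>j. x (is ! \<sigma> j)) [0..<k] = map x (permute_list \<sigma> is)"
    using assms by (simp add: permute_list_def)
  also have "prod_list \<dots> = prod_mset (image_mset x (mset (permute_list \<sigma> is)))"
    by (metis mset_map prod_mset_prod_list)
  also have "\<dots> = prod_mset (image_mset x (mset is))"
    using assms by simp
  also have "\<dots> = prod_list (map x is)"
    by (metis mset_map prod_mset_prod_list)
  finally show ?thesis .
qed

lemma hlp_iff:
  assumes "\<sigma> permutes {..<k}" "length is = k"
  shows "(prod_list (map x is) = eps_sign \<sigma> is * prod_list (map (\<lambda>j. (x::nat\<Rightarrow>real) (is ! \<sigma> j)) [0..<k]))
     \<longleftrightarrow> (eps_sign \<sigma> is = -1 \<longrightarrow> prod_list (map x is) = 0)"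
  using eps_cases[of \<sigma> "is"] prod_perm[OF assms, of x] by auto

lemma bounded_perm:
  assumes "\<sigma> permutes {..<k}" "length is = k"
  shows "\<forall>r<length is. \<sigma> r < length is"
  using assms permutes_in_image by fastforce

lemma eps_inj:
  assumes "\<sigma> permutes {..<k}" "length is = k" "inj_on h (set is)"
  shows "eps_sign \<sigma> (map h is) = eps_sign \<sigma> is"
proof -
  have b: "\<forall>r<length is. \<sigma> r < length is" by (rule bounded_perm[OF assms(1,2)])
  have "Bset \<sigma> is (\<lambda>x y. h x \<noteq> h y) = Bset \<sigma> is (\<lambda>x y. x \<noteq> y)"
    by (rule Bset_cong[OF _ b]) (use assms(3) in \<open>auto dest: inj_onD\<close>)
  then show ?thesis using Bset_map[OF b, of h] by (simp add: eps_Bset)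
qed

lemma eps_small:
  assumes "card (set is) \<le> 1" "\<forall>r<length is. \<sigma> r < length is"
  shows "eps_sign \<sigma> is = 1"
proof -
  have "\<forall>x\<in>set is. \<forall>y\<in>set is. x = y"
    using assms card_le_Suc0_iff_eq[of "set is"] by simp
  then have "Bset \<sigma> is (\<lambda>x y. x \<noteq> y) = {}"
    using assms(2) by (auto simp: Bset_def)
  then show ?thesis by (simp add: eps_Bset)
qed

lemma four_elems:
  assumes "4 \<le> card S"
  obtains a b u w where "a \<in> S" "b \<in> S" "u \<in> S" "w \<in> S" "distinct [a,b,u,w]"
proof -
  obtain T where T: "T \<subseteq> S" "card T = 4" "finite T"
    using obtain_subset_with_card_n[OF assms] by metis
  then obtain a b u w where "T = {a,b,u,w}" "distinct [a,b,u,w]"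
    by (auto simp: card_Suc_eq numeral_eq_Suc)
  then show ?thesis using that T by auto
qed

lemma card_collapse:
  assumes "finite S" "a \<in> S" "b \<in> S" "a \<noteq> b" "g a = g b"
  shows "card (g ` S) < card S"
proof -
  have "\<not> inj_on g S" using assms by (auto dest: inj_onD)
  then have "card (g ` S) \<noteq> card S" using eq_card_imp_inj_on[OF assms(1)] by auto
  moreover have "card (g ` S) \<le> card S" by (rule card_image_le[OF assms(1)])
  ultimately show ?thesis by simp
qed

lemma parity_aux:
  fixes E A1 A2 A3 B1 B2 B3 :: nat
  assumes "odd E" "E = A1 + B1" "E = A2 + B2" "E = A3 + B3" "B3 = B1 + B2"
  shows "odd A1 \<or> odd A2 \<or> odd A3"
  using assms by presburger

lemma reduce:
  assumes "\<sigma> permutes {..<k}" "length is = k" "eps_sign \<sigma> is = -1" "4 \<le> card (set is)"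
  shows "\<exists>g. g ` set is \<subseteq> set is \<and> card (g ` set is) < card (set is) \<and> eps_sign \<sigma> (map g is) = -1"
proof -
  have bd: "\<forall>r<length is. \<sigma> r < length is" by (rule bounded_perm[OF assms(1,2)])
  obtain a b u w where el: "a \<in> set is" "b \<in> set is" "u \<in> set is" "w \<in> set is"
    and d: "distinct [a,b,u,w]"
    using four_elems[OF assms(4)] by metis
  define g1 where "g1 = (\<lambda>v. if v = b then a else v)"
  define g2 where "g2 = (\<lambda>v. if v = w then u else v)"
  define g where "g = (\<lambda>v. if v = b then a else if v = w then u else v)"
  define E where "E = card (Bset \<sigma> is (\<lambda>x y. x \<noteq> y))"
  have oddE: "odd E" using assms(3) by (simp add: E_def eps_neg_iff)
  have e1: "E = card (Bset \<sigma> is (\<lambda>x y. g1 x \<noteq> g1 y)) + card (Bset \<sigma> is (\<lambda>x y. x \<noteq> y \<and> g1 x = g1 y))"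
    unfolding E_def by (rule Bset_add) auto
  have e2: "E = card (Bset \<sigma> is (\<lambda>x y. g2 x \<noteq> g2 y)) + card (Bset \<sigma> is (\<lambda>x y. x \<noteq> y \<and> g2 x = g2 y))"
    unfolding E_def by (rule Bset_add) auto
  have e3: "E = card (Bset \<sigma> is (\<lambda>x y. g x \<noteq> g y)) + card (Bset \<sigma> is (\<lambda>x y. x \<noteq> y \<and> g x = g y))"
    unfolding E_def by (rule Bset_add) auto
  have e4: "card (Bset \<sigma> is (\<lambda>x y. x \<noteq> y \<and> g x = g y)) =
      card (Bset \<sigma> is (\<lambda>x y. x \<noteq> y \<and> g1 x = g1 y)) + card (Bset \<sigma> is (\<lambda>x y. x \<noteq> y \<and> g2 x = g2 y))"
    by (rule Bset_add) (use d in \<open>auto simp: g_def g1_def g2_def\<close>)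
  have c1: "card (g1 ` set is) < card (set is)"
    by (rule card_collapse[of _ a b]) (use el d in \<open>auto simp: g1_def\<close>)
  have c2: "card (g2 ` set is) < card (set is)"
    by (rule card_collapse[of _ u w]) (use el d in \<open>auto simp: g2_def\<close>)
  have c3: "card (g ` set is) < card (set is)"
    by (rule card_collapse[of _ a b]) (use el d in \<open>auto simp: g_def\<close>)
  have s1: "g1 ` set is \<subseteq> set is" using el by (auto simp: g1_def)
  have s2: "g2 ` set is \<subseteq> set is" using el by (auto simp: g2_def)
  have s3: "g ` set is \<subseteq> set is" using el by (auto simp: g_def)
  have "odd (card (Bset \<sigma> is (\<lambda>x y. g1 x \<noteq> g1 y))) \<or> odd (card (Bset \<sigma> is (\<lambda>x y. g2 x \<noteq> g2 y)))
        \<or> odd (card (Bset \<sigma> is (\<lambda>x y. g x \<noteq> g y)))"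
    using parity_aux[OF oddE e1 e2 e3 e4] .
  moreover have "\<And>h. eps_sign \<sigma> (map h is) = -1 \<longleftrightarrow> odd (card (Bset \<sigma> is (\<lambda>x y. h x \<noteq> h y)))"
    by (simp only: eps_neg_iff Bset_map[OF bd])
  ultimately show ?thesis
    using c1 c2 c3 s1 s2 s3 by blast
qed

lemma sub_N: "real_sphere_sub N N = real_sphere N"
proof -
  have "\<not> (length is = N + 1 \<and> distinct is \<and> set is \<subseteq> {..<N})" for "is" :: "nat list"
  proof
    assume h: "length is = N + 1 \<and> distinct is \<and> set is \<subseteq> {..<N}"
    then have "card (set is) = N + 1" by (simp add: distinct_card)
    moreover have "card (set is) \<le> N" using h by (metis card_lessThan card_mono finite_lessThan)
    ultimately show False by simp
  qed
  then show ?thesis by (auto simp: real_sphere_sub_def)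
qed

theorem proposition2p6:
  fixes N :: nat and F :: "(nat \<times> (nat \<Rightarrow> nat)) set"
  assumes "N \<ge> 1" and "perm_family F"
  shows "\<exists>d\<in>{1..N}. real_sphere N \<inter> half_liberated_points N F = real_sphere_sub N d
           \<and> d \<in> {1, 2, N}"
proof -
  have pf: "\<And>k \<sigma>. (k, \<sigma>) \<in> F \<Longrightarrow> \<sigma> permutes {..<k}"
    using assms(2) by (auto simp: perm_family_def)
  define W where "W = {is. \<exists>(k, \<sigma>)\<in>F. length is = k \<and> set is \<subseteq> {..<N} \<and> eps_sign \<sigma> is = -1}"
  have HLP: "half_liberated_points N F = {x::nat\<Rightarrow>real. \<forall>is\<in>W. prod_list (map x is) = 0}"
  proof (intro set_eqI iffI)
    fix x :: "nat \<Rightarrow> real" assume "x \<in> half_liberated_points N F"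
    then show "x \<in> {x. \<forall>is\<in>W. prod_list (map x is) = 0}"
      using hlp_iff[OF pf] by (fastforce simp: half_liberated_points_def W_def)
  next
    fix x :: "nat \<Rightarrow> real" assume "x \<in> {x. \<forall>is\<in>W. prod_list (map x is) = 0}"
    then show "x \<in> half_liberated_points N F"
      using hlp_iff[OF pf] by (fastforce simp: half_liberated_points_def W_def)
  qed
  show ?thesis
  proof (cases "W = {}")
    case True
    then have "real_sphere N \<inter> half_liberated_points N F = real_sphere_sub N N"
      by (simp add: HLP sub_N)
    then show ?thesis using assms(1) by auto
  next
    case False
    then obtain is0 where is0W: "is0 \<in> W" by auto
    obtain i0 where i0W: "i0 \<in> W" and min: "\<And>is. is \<in> W \<Longrightarrow> card (set i0) \<le> card (set is)"
      using ex_has_least_nat[of "\<lambda>is. is \<in> W" is0 "\<lambda>is. card (set is)", OF is0W] by blast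
    define m where "m = card (set i0)"
    obtain k \<sigma> where k\<sigma>: "(k, \<sigma>) \<in> F" "length i0 = k" "set i0 \<subseteq> {..<N}" "eps_sign \<sigma> i0 = -1"
      using i0W by (auto simp: W_def)
    have m2: "m \<ge> 2"
    proof (rule ccontr)
      assume "\<not> m \<ge> 2"
      then have "eps_sign \<sigma> i0 = 1"
        by (intro eps_small bounded_perm[OF pf[OF k\<sigma>(1)] k\<sigma>(2)]) (simp add: m_def)
      then show False using k\<sigma>(4) by simp
    qed
    have m3: "m \<le> 3"
    proof (rule ccontr)
      assume "\<not> m \<le> 3"
      then obtain g where g: "g ` set i0 \<subseteq> set i0" "card (g ` set i0) < card (set i0)"
          "eps_sign \<sigma> (map g i0) = -1"
        using reduce[OF pf[OF k\<sigma>(1)] k\<sigma>(2) k\<sigma>(4)] by (auto simp: m_def)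
      have "map g i0 \<in> W" unfolding W_def using g k\<sigma> by auto
      from min[OF this] g(2) show False by simp
    qed
    have mN: "m \<le> N"
      unfolding m_def using k\<sigma>(3) by (metis card_lessThan card_mono finite_lessThan)
    define d where "d = m - 1"
    have dm: "d + 1 = m" using m2 by (simp add: d_def)
    have eq: "real_sphere N \<inter> half_liberated_points N F = real_sphere_sub N d"
    proof (intro set_eqI iffI)
      fix x :: "nat \<Rightarrow> real" assume x: "x \<in> real_sphere N \<inter> half_liberated_points N F"
      then have xW: "\<And>is. is \<in> W \<Longrightarrow> prod_list (map x is) = 0" by (auto simp: HLP)
      have "prod_list (map x js) = 0"
        if js: "length js = d + 1" "distinct js" "set js \<subseteq> {..<N}" for js
      proof -
        have "card (set js) = card (set i0)" using js dm by (simp add: distinct_card m_def)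
        then obtain h where h: "bij_betw h (set i0) (set js)"
          using finite_same_card_bij[of "set i0" "set js"] by auto
        have "inj_on h (set i0)" using h by (simp add: bij_betw_def)
        then have "eps_sign \<sigma> (map h i0) = -1"
          using eps_inj[OF pf[OF k\<sigma>(1)] k\<sigma>(2)] k\<sigma>(4) by simp
        moreover have "set (map h i0) = set js" using h by (simp add: bij_betw_def)
        ultimately have "map h i0 \<in> W" unfolding W_def using k\<sigma> js by auto
        then have "prod_list (map x (map h i0)) = 0" by (rule xW)
        then obtain i where "i \<in> set i0" "x (h i) = 0" by (auto simp: prod_list_zero_iff)
        moreover have "h i \<in> set js" using h \<open>i \<in> set i0\<close> by (auto simp: bij_betw_def)
        ultimately show ?thesis by (force simp: prod_list_zero_iff)
      qed
      then show "x \<in> real_sphere_sub N d" using x by (auto simp: real_sphere_sub_def)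
    next
      fix x :: "nat \<Rightarrow> real" assume x: "x \<in> real_sphere_sub N d"
      have "prod_list (map x is) = 0" if isW: "is \<in> W" for "is"
      proof -
        have "m \<le> card (set is)" using min[OF isW] by (simp add: m_def)
        then obtain T where T: "T \<subseteq> set is" "card T = m" "finite T"
          using obtain_subset_with_card_n by metis
        define js where "js = sorted_list_of_set T"
        have js: "length js = d + 1" "distinct js" "set js = T"
          using T dm by (auto simp: js_def)
        have "set is \<subseteq> {..<N}" using isW by (auto simp: W_def)
        then have "prod_list (map x js) = 0"
          using x js T by (auto simp: real_sphere_sub_def)
        then obtain j where "j \<in> T" "x j = 0" using js by (auto simp: prod_list_zero_iff)
        then show ?thesis using T by (force simp: prod_list_zero_iff)
      qed
      then show "x \<in> real_sphere N \<inter> half_liberated_points N F"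
        using x by (auto simp: HLP real_sphere_sub_def)
    qed
    have "d \<in> {1, 2, N}" "d \<in> {1..N}" using m2 m3 mN by (auto simp: d_def)
    then show ?thesis using eq by blast
  qed
qed

end
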